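(* There is a universal constant $C>0$ such that for all $s\geq 2$ and $r\geq 0$ the Euclidian-hyperboloidal time function $T$ satisfies $$ |\partial_s T(s,r)|\leq \begin{cases} C\,\dfrac{s}{(s^2+r^2)^{1/2}}, & r\leq -1+s^2/2,\\[2mm] C\Big(\dfrac{\xi(s,r)\,s}{(s^2+r^2)^{1/2}}+2(1-\xi(s,r))\,s\Big), & -1+s^2/2\leq r\leq s^2/2,\\[2mm] 2C\,s, & r\geq s^2/2. \end{cases} $$ (In the first region one has $T(s,r)=\sqrt{s^2+r^2}$, so the first bound is $C\,s/T(s,r)$.)
   Context: Let $\rho_1(y)=e^{-2/(1-(2y-1)^2)}$ for $0<y<1$ and $\rho_1(y)=0$ otherwise, let $\rho_0=\int_{\mathbb R}\rho_1$, and let $\chi(y)=\rho_0^{-1}\int_{-\infty}^y\rho_1(y')\,dy'$; so $\chi$ is smooth, $\chi=0$ on $(-\infty,0]$, $\chi=1$ on $[1,\infty)$, strictly increasing on $(0,1)$. For $s\geq 2$, $r\geq 0$ set $\xi(s,r)=1-\chi(r+1-s^2/2)$, so $\xi=1$ for $r\leq -1+s^2/2$ and $\xi=0$ for $r\geq s^2/2$. The function $T=T(s,r)$ ($s\geq 2$, $r\geq 0$) is defined by $\partial_r T(s,r)=\xi(s,r)\,\dfrac{r}{\sqrt{r^2+s^2}}$, $T(s,0)=s$. *)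

theory Defs
  imports "HOL-Analysis.Analysis"
begin

definition rho1 :: "real \<Rightarrow> real" where
  "rho1 y = (if 0 < y \<and> y < 1 then exp (- 2 / (1 - (2*y - 1)^2)) else 0)"

definition rho0 :: real where
  "rho0 = integral UNIV rho1"

definition chi :: "real \<Rightarrow> real" where
  "chi y = integral {..y} rho1 / rho0"

definition xi :: "real \<Rightarrow> real \<Rightarrow> real" where
  "xi s r = 1 - chi (r + 1 - s^2 / 2)"

text \<open>The unique solution of d/dr T = xi r / sqrt(r^2+s^2), T(s,0) = s.\<close>
definition T :: "real \<Rightarrow> real \<Rightarrow> real" where
  "T s r = s + integral {0..r} (\<lambda>r'. xi s r' * r' / sqrt (r'^2 + s^2))"

end

theory Submission imports Defs begin

lemma rho1_nonneg: "0 \<le> rho1 y" by (simp add: rho1_def)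

lemma rho1_zero: "y \<le> 0 \<or> y \<ge> 1 \<Longrightarrow> rho1 y = 0" by (auto simp: rho1_def)

lemma exp_neg_inv_le: fixes t::real assumes "t > 0" shows "exp (- 1 / t) \<le> t"
proof -
  have "1/t \<le> exp (1/t)" using exp_ge_add_one_self[of "1/t"] by linarith
  hence "1 / exp (1/t) \<le> t" using assms by (simp add: field_simps)
  thus ?thesis by (simp add: exp_minus field_simps)
qed

lemma rho1_le: "rho1 y \<le> 2 * \<bar>y\<bar> \<and> rho1 y \<le> 2 * \<bar>1 - y\<bar>"
proof (cases "0 < y \<and> y < 1")
  case True
  have q: "1 - (2*y - 1)^2 = 4*y*(1-y)" by (simp add: power2_eq_square algebra_simps)
  have p: "0 < 4*y*(1-y)" using True by simp
  have "rho1 y = exp (- 2 / (4*y*(1-y)))" using True by (simp add: rho1_def q)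
  also have "\<dots> = exp (- 1 / (2*y*(1-y)))" using True by (simp add: divide_simps)
  also have "\<dots> \<le> 2*y*(1-y)" by (rule exp_neg_inv_le) (use p in simp)
  finally have "rho1 y \<le> 2*y*(1-y)" .
  moreover have "2*y*(1-y) \<le> 2*y" using True by (intro mult_left_le) auto
  moreover have "2*y*(1-y) \<le> 2*(1-y)" using True by (intro mult_right_mono) auto
  ultimately have "rho1 y \<le> 2*y" "rho1 y \<le> 2*(1-y)" by linarith+
  thus ?thesis using True by auto
next
  case False thus ?thesis by (auto simp: rho1_def)
qed

lemma rho1_cont: "isCont rho1 y"
proof -
  consider "y < 0" | "y = 0" | "0 < y \<and> y < 1" | "y = 1" | "y > 1" by linarith
  thus ?thesis
  proof cases
    case 1
    have "eventually (\<lambda>x. x \<in> {..<0}) (nhds y)" using 1 by (intro eventually_nhds_in_open) auto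
    hence "eventually (\<lambda>x. rho1 x = 0) (nhds y)" by eventually_elim (simp add: rho1_zero)
    thus ?thesis using isCont_cong[of rho1 "\<lambda>x. 0" y] by simp
  next
    case 5
    have "eventually (\<lambda>x. x \<in> {1<..}) (nhds y)" using 5 by (intro eventually_nhds_in_open) auto
    hence "eventually (\<lambda>x. rho1 x = 0) (nhds y)" by eventually_elim (simp add: rho1_zero)
    thus ?thesis using isCont_cong[of rho1 "\<lambda>x. 0" y] by simp
  next
    case 2
    have "(rho1 \<longlongrightarrow> 0) (at 0)"
      by (rule Lim_null_comparison[where g="\<lambda>x. 2*\<bar>x\<bar>"])
         (use rho1_le rho1_nonneg in \<open>auto intro!: always_eventually tendsto_eq_intros\<close>)
    thus ?thesis using 2 by (simp add: isCont_def rho1_zero)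
  next
    case 4
    have "(rho1 \<longlongrightarrow> 0) (at 1)"
      by (rule Lim_null_comparison[where g="\<lambda>x. 2*\<bar>1-x\<bar>"])
         (use rho1_le rho1_nonneg in \<open>auto intro!: always_eventually tendsto_eq_intros\<close>)
    thus ?thesis using 4 by (simp add: isCont_def rho1_zero)
  next
    case 3
    have "eventually (\<lambda>x. x \<in> {0<..<1}) (nhds y)" using 3 by (intro eventually_nhds_in_open) auto
    hence ev: "eventually (\<lambda>x. rho1 x = exp (- 2 / (1 - (2*x - 1)^2))) (nhds y)" by eventually_elim (simp add: rho1_def)
    have ne: "1 - (2*y - 1)^2 \<noteq> 0"
    proof -
      have "1 - (2*y - 1)^2 = 4*y*(1-y)" by (simp add: power2_eq_square algebra_simps)
      thus ?thesis using 3 by simp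
    qed
    have "isCont (\<lambda>x. exp (- 2 / (1 - (2*x - 1)^2))) y" using ne by (intro continuous_intros) auto
    thus ?thesis using isCont_cong[OF ev] by simp
  qed
qed

lemma rho1_cont_on: "continuous_on S rho1"
  using rho1_cont by (simp add: continuous_at_imp_continuous_on)

lemma rho1_integrable: "rho1 integrable_on {a..b}"
  by (rule integrable_continuous_interval) (rule rho1_cont_on)

lemma int_rho1_neg: "b \<le> 0 \<Longrightarrow> integral {a..b} rho1 = 0"
proof -
  assume b: "b \<le> 0"
  have "integral {a..b} rho1 = integral {a..b} (\<lambda>x. 0)" by (rule integral_cong) (use b in \<open>auto simp: rho1_zero\<close>)
  thus ?thesis by simp
qed

lemma int_rho1_shift: assumes "a \<le> 0" shows "integral {a..y} rho1 = integral {0..y} rho1"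
proof (cases "y \<le> 0")
  case True thus ?thesis by (simp add: int_rho1_neg)
next
  case False
  have "integral {a..0} rho1 + integral {0..y} rho1 = integral {a..y} rho1"
    by (rule Henstock_Kurzweil_Integration.integral_combine) (use assms False in \<open>auto simp: rho1_integrable\<close>)
  thus ?thesis by (simp add: int_rho1_neg)
qed

lemma rho1_int_UNIV: "(rho1 has_integral integral {0..1} rho1) UNIV"
  by (rule has_integral_on_superset[where S="{0..1}"]) (auto simp: rho1_integrable rho1_zero)

lemma rho0_eq: "rho0 = integral {0..1} rho1"
  unfolding rho0_def using rho1_int_UNIV by (rule integral_unique)

lemma rho0_pos: "rho0 > 0"
proof -
  have "integral {1/4..3/4::real} (\<lambda>x. exp (-8/3)) \<le> integral {1/4..3/4::real} rho1"
  proof (rule integral_le)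
    fix x :: real assume x: "x \<in> {1/4..3/4}"
    have "\<bar>2*x-1\<bar> \<le> \<bar>1/2\<bar>" using x by (auto simp: abs_if)
    hence "(2*x-1)^2 \<le> (1/2)^2" by (simp only: abs_le_square_iff)
    hence q: "1 - (2*x-1)^2 \<ge> 3/4" by (simp add: power2_eq_square)
    hence "2 / (1 - (2*x-1)^2) \<le> 2 / (3/4)" by (intro divide_left_mono) auto
    hence "-8/3 \<le> - 2 / (1 - (2*x-1)^2)" by simp
    thus "exp (-8/3) \<le> rho1 x" using x by (simp add: rho1_def)
  qed (auto simp: rho1_integrable)
  hence a: "exp (-8/3) / 2 \<le> integral {1/4..3/4::real} rho1" by simp
  have "integral {1/4..3/4::real} rho1 \<le> integral {0..1} rho1"
    by (rule integral_subset_le) (auto simp: rho1_integrable rho1_nonneg)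
  moreover have "0 < exp (-8/3::real) / 2" by simp
  ultimately show ?thesis using a rho0_eq by linarith
qed

lemma rho0_ne: "rho0 \<noteq> 0" using rho0_pos by simp

definition F :: "real \<Rightarrow> real" where "F y = integral {0..y} rho1"

lemma chi_eq: "chi y = F y / rho0"
proof (cases "y \<le> 0")
  case True
  have "integral {..y} rho1 = integral {..y} (\<lambda>x. 0)" by (rule integral_cong) (use True in \<open>auto simp: rho1_zero\<close>)
  thus ?thesis using True by (simp add: chi_def F_def int_rho1_neg)
next
  case False
  have "(rho1 has_integral F y) {0..y}" unfolding F_def using rho1_integrable by blast
  hence "((\<lambda>x. if x \<in> {0..y} then rho1 x else 0) has_integral F y) {..y}"
    by (subst has_integral_restrict) auto
  hence "(rho1 has_integral F y) {..y}"
    by (rule has_integral_cong[THEN iffD1, rotated]) (auto simp: rho1_zero)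
  thus ?thesis by (simp add: chi_def integral_unique)
qed

lemma F_nonneg: "0 \<le> F y"
  unfolding F_def by (rule integral_nonneg) (auto simp: rho1_integrable rho1_nonneg)

lemma F_le: "F y \<le> rho0"
proof -
  have "F y \<le> integral UNIV rho1" unfolding F_def
    by (rule integral_subset_le) (use rho1_int_UNIV in \<open>auto simp: rho1_integrable rho1_nonneg\<close>)
  thus ?thesis by (simp add: rho0_def)
qed

lemma F_zero: "y \<le> 0 \<Longrightarrow> F y = 0" by (simp add: F_def int_rho1_neg)

lemma F_deriv: "(F has_real_derivative rho1 y) (at y)"
proof -
  define a where "a = min y 0 - 1"
  have a: "a \<le> 0" "a < y" by (auto simp: a_def)
  have eq: "F = (\<lambda>x. integral {a..x} rho1)" by (rule ext) (simp only: F_def int_rho1_shift[OF a(1)])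
  have "((\<lambda>x. integral {a..x} rho1) has_real_derivative rho1 y) (at y within {a..y+1})"
    by (rule integral_has_real_derivative) (use a in \<open>auto simp: rho1_cont_on\<close>)
  hence "((\<lambda>x. integral {a..x} rho1) has_real_derivative rho1 y) (at y within {a<..<y+1})"
    by (rule has_field_derivative_subset) auto
  hence "((\<lambda>x. integral {a..x} rho1) has_real_derivative rho1 y) (at y)"
    using a by (subst (asm) at_within_open) auto
  thus ?thesis using eq by simp
qed

lemma chi_deriv: "(chi has_real_derivative rho1 y / rho0) (at y)"
proof -
  have "chi = (\<lambda>y. F y / rho0)" by (simp add: fun_eq_iff chi_eq)
  have "((\<lambda>y. F y / rho0) has_real_derivative rho1 y / rho0) (at y)" by (rule DERIV_cdivide[OF F_deriv])
  thus ?thesis by (simp only: \<open>chi = (\<lambda>y. F y / rho0)\<close>)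
qed

lemma chi_cont: "isCont chi y" using chi_deriv DERIV_isCont by blast
lemma chi_cont_on: "continuous_on S chi" using chi_cont by (simp add: continuous_at_imp_continuous_on)
lemma chi_zero: "y \<le> 0 \<Longrightarrow> chi y = 0" by (simp add: chi_eq F_zero)
lemma chi_ge: "0 \<le> chi y" using F_nonneg rho0_pos by (simp add: chi_eq)
lemma chi_le: "chi y \<le> 1" using F_le rho0_pos by (simp add: chi_eq)

lemma rho1_comp_cont[continuous_intros]: "continuous_on S f \<Longrightarrow> continuous_on S (\<lambda>x. rho1 (f x))"
  by (rule continuous_on_compose2[OF rho1_cont_on]) auto
lemma chi_comp_cont[continuous_intros]: "continuous_on S f \<Longrightarrow> continuous_on S (\<lambda>x. chi (f x))"
  by (rule continuous_on_compose2[OF chi_cont_on]) auto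
lemma chi_comp_deriv[derivative_intros]:
  "(f has_real_derivative f') (at x within S) \<Longrightarrow> ((\<lambda>x. chi (f x)) has_real_derivative rho1 (f x) / rho0 * f') (at x within S)"
  by (rule DERIV_chain2[OF chi_deriv])

definition fI :: "real \<Rightarrow> real \<Rightarrow> real" where
  "fI \<sigma> t = xi \<sigma> t * t / sqrt (t^2 + \<sigma>^2)"
definition fD :: "real \<Rightarrow> real \<Rightarrow> real" where
  "fD \<sigma> t = \<sigma> * rho1 (t + 1 - \<sigma>^2/2) / rho0 * t / sqrt (t^2+\<sigma>^2) - xi \<sigma> t * t * \<sigma> / (sqrt (t^2+\<sigma>^2))^3"

lemma alg1: fixes S::real assumes "S > 0" shows
  "(((0 - R / r0 * - \<sigma>) * t + 0 * b) * S - b * t * (\<sigma> / S)) / (S * S) = \<sigma> * R / r0 * t / S - b * t * \<sigma> / S ^ 3"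
  using assms by (simp add: field_simps power3_eq_cube)

lemma fI_deriv: assumes "\<sigma> > 0" shows "((\<lambda>\<sigma>. fI \<sigma> t) has_real_derivative fD \<sigma> t) (at \<sigma>)"
proof -
  have q: "t^2 + \<sigma>^2 > 0" using assms by (simp add: add_nonneg_pos)
  have d1: "((\<lambda>\<sigma>. chi (t+1-\<sigma>^2/2)) has_real_derivative rho1 (t+1-\<sigma>^2/2)/rho0 * (-\<sigma>)) (at \<sigma>)"
    by (rule chi_comp_deriv) (auto intro!: derivative_eq_intros)
  have d2: "((\<lambda>\<sigma>. sqrt(t^2+\<sigma>^2)) has_real_derivative \<sigma> / sqrt(t^2+\<sigma>^2)) (at \<sigma>)"
    using q by (auto intro!: derivative_eq_intros simp: field_simps)
  have sp: "sqrt(t^2+\<sigma>^2) > 0" using q by simp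
  note h1 = DERIV_diff[OF DERIV_const[of 1] d1]
  note h2 = DERIV_mult[OF h1 DERIV_const[of t]]
  note h3 = DERIV_divide[OF h2 d2]
  have h4: "((\<lambda>\<sigma>. (1 - chi (t+1-\<sigma>^2/2)) * t / sqrt(t^2+\<sigma>^2)) has_real_derivative fD \<sigma> t) (at \<sigma>)"
    apply (rule DERIV_cong[OF h3])
    unfolding fD_def xi_def
    apply (metis sp order_less_irrefl)
    by (rule alg1[OF sp])
  show ?thesis unfolding fI_def xi_def using h4 by simp
qed

lemma sq_pos: "(x::real) \<ge> 2 \<Longrightarrow> sqrt (t^2 + x^2) \<noteq> 0"
proof -
  assume "x \<ge> 2" hence "t^2 + x^2 > 0" by (simp add: add_nonneg_pos)
  hence "sqrt (t^2 + x^2) > 0" by (rule real_sqrt_gt_zero)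
  thus ?thesis by linarith
qed

lemma fI_cont: "x \<ge> 2 \<Longrightarrow> continuous_on S (fI x)"
  unfolding fI_def[abs_def] xi_def
  by (intro continuous_intros) (simp_all add: sq_pos)

lemma fD_cont: "continuous_on ({2..} \<times> S) (\<lambda>(x, t). fD x t)"
  unfolding fD_def xi_def split_beta
  by (intro continuous_intros) (simp_all add: rho0_ne sq_pos mem_Times_iff)

lemma fD_cont1: "x \<ge> 2 \<Longrightarrow> continuous_on S (fD x)"
  unfolding fD_def[abs_def] xi_def
  by (intro continuous_intros) (simp_all add: rho0_ne sq_pos)

lemma T_deriv: assumes "s \<ge> 2" shows
  "((\<lambda>\<sigma>. T \<sigma> r) has_real_derivative 1 + integral {0..r} (fD s)) (at s within {2..})"
proof -
  have eq: "(\<lambda>\<sigma>. T \<sigma> r) = (\<lambda>\<sigma>. \<sigma> + integral (cbox 0 r) (fI \<sigma>))"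
    by (rule ext) (simp only: T_def fI_def[abs_def] cbox_interval)
  have "((\<lambda>\<sigma>. integral (cbox 0 r) (fI \<sigma>)) has_real_derivative integral (cbox 0 r) (fD s)) (at s within {2..})"
  proof (rule leibniz_rule_field_derivative)
    fix x t :: real assume "x \<in> {2..}" "t \<in> cbox 0 r"
    hence "x > 0" by simp
    from fI_deriv[OF this] show "((\<lambda>x. fI x t) has_field_derivative fD x t) (at x within {2..})"
      by (rule has_field_derivative_at_within)
  next
    fix x :: real assume "x \<in> {2..}"
    hence "x \<ge> 2" by simp
    from fI_cont[OF this] show "fI x integrable_on cbox 0 r" by (rule integrable_continuous)
  next
    show "continuous_on ({2..} \<times> cbox 0 r) (\<lambda>(x, t). fD x t)" by (rule fD_cont)
  next
    show "s \<in> {2..}" using assms by simp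
  next
    show "convex ({2..} :: real set)" by (rule convex_real_interval)
  qed
  hence "((\<lambda>\<sigma>. \<sigma> + integral (cbox 0 r) (fI \<sigma>)) has_real_derivative 1 + integral (cbox 0 r) (fD s)) (at s within {2..})"
    by (rule DERIV_add[OF DERIV_ident])
  thus ?thesis unfolding eq cbox_interval .
qed

lemma p_integral: assumes s: "s \<ge> 2" and m: "m \<ge> 0"
  shows "((\<lambda>t. t * s / (sqrt (t^2+s^2))^3) has_integral (1 - s / sqrt (m^2+s^2))) {0..m}"
proof -
  have G: "((\<lambda>t. - s / sqrt (t^2+s^2)) has_real_derivative t * s / (sqrt (t^2+s^2))^3) (at t)" for t
  proof -
    have q: "t^2 + s^2 > 0" using s by (simp add: add_nonneg_pos)
    hence sp: "sqrt (t^2+s^2) > 0" by simp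
    have d2: "((\<lambda>t. sqrt(t^2+s^2)) has_real_derivative t / sqrt(t^2+s^2)) (at t)"
      using q by (auto intro!: derivative_eq_intros simp: field_simps)
    note h = DERIV_divide[OF DERIV_const[of "-s"] d2]
    show ?thesis
      apply (rule DERIV_cong[OF h])
      apply (metis sp order_less_irrefl)
      using sp by (simp add: field_simps power3_eq_cube)
  qed
  have "((\<lambda>t. t * s / (sqrt (t^2+s^2))^3) has_integral ((- s / sqrt (m^2+s^2)) - (- s / sqrt (0^2+s^2)))) {0..m}"
    by (rule fundamental_theorem_of_calculus) (use m G in \<open>auto intro: has_field_derivative_at_within simp: has_real_derivative_iff_has_vector_derivative[symmetric]\<close>)
  moreover have "sqrt (0^2+s^2) = s" using s by simp
  ultimately show ?thesis using s by simp
qed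

lemma chi_integral: assumes "r \<ge> 0"
  shows "((\<lambda>t. rho1 (t + 1 - s^2/2) / rho0) has_integral (chi (r + 1 - s^2/2) - chi (0 + 1 - s^2/2))) {0..r}"
proof (rule fundamental_theorem_of_calculus)
  fix t assume "t \<in> {0..r}"
  have "((\<lambda>t. chi (t + 1 - s^2/2)) has_real_derivative rho1 (t + 1 - s^2/2) / rho0 * 1) (at t)"
    by (rule chi_comp_deriv) (auto intro!: derivative_eq_intros)
  thus "((\<lambda>t. chi (t + 1 - s^2/2)) has_vector_derivative rho1 (t + 1 - s^2/2) / rho0) (at t within {0..r})"
    by (simp add: has_real_derivative_iff_has_vector_derivative[symmetric] has_field_derivative_at_within)
qed (use assms in simp)

lemma xi_one: "t \<le> s^2/2 - 1 \<Longrightarrow> xi s t = 1"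
  by (simp add: xi_def chi_zero)

lemma D_bounds: assumes s: "s \<ge> 2" and r: "r \<ge> 0"
  defines "D \<equiv> 1 + integral {0..r} (fD s)"
  defines "m \<equiv> min r (s^2/2 - 1)"
  shows "s / sqrt (r^2+s^2) \<le> D" "D \<le> s / sqrt (m^2+s^2) + s * (1 - xi s r)"
proof -
  define Af where "Af t = s * rho1 (t + 1 - s^2/2) / rho0 * t / sqrt (t^2+s^2)" for t
  define Bf where "Bf t = xi s t * t * s / (sqrt (t^2+s^2))^3" for t
  define p where "p t = t * s / (sqrt (t^2+s^2))^3" for t
  have sq: "sqrt (t^2+s^2) > 0" for t using s by (simp add: add_nonneg_pos)
  have "(4::real) \<le> s * s" using mult_mono[of 2 s 2 s] s by simp
  hence s2: "s^2 \<ge> 4" by (simp add: power2_eq_square)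
  have m0: "0 \<le> m" "m \<le> r" using r s2 by (auto simp: m_def)
  have cA: "continuous_on S Af" for S unfolding Af_def
    by (intro continuous_intros) (use sq rho0_ne in \<open>auto simp: less_imp_neq[symmetric]\<close>)
  have cB: "continuous_on S Bf" for S unfolding Bf_def xi_def
    by (intro continuous_intros) (use sq in \<open>auto simp: less_imp_neq[symmetric]\<close>)
  have cp: "continuous_on S p" for S unfolding p_def
    by (intro continuous_intros) (use sq in \<open>auto simp: less_imp_neq[symmetric]\<close>)
  have iA: "Af integrable_on {a..b}" for a b by (rule integrable_continuous_interval[OF cA])
  have iB: "Bf integrable_on {a..b}" for a b by (rule integrable_continuous_interval[OF cB])
  have ip: "p integrable_on {a..b}" for a b by (rule integrable_continuous_interval[OF cp])
  have fDe: "fD s = (\<lambda>t. Af t - Bf t)" by (simp add: fun_eq_iff fD_def Af_def Bf_def)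
  have Deq: "D = 1 + integral {0..r} Af - integral {0..r} Bf"
    unfolding D_def fDe by (simp add: integral_diff[OF iA iB])
  have xi01: "0 \<le> xi s t" "xi s t \<le> 1" for t using chi_ge chi_le by (auto simp: xi_def)
  have p0: "0 \<le> p t" if "t \<ge> 0" for t using that sq s by (simp add: p_def)
  have A0: "0 \<le> integral {0..r} Af"
    by (rule integral_nonneg[OF iA]) (use s rho0_pos in \<open>auto simp: Af_def rho1_nonneg\<close>)
  have hA: "((\<lambda>t. s * (rho1 (t + 1 - s^2/2) / rho0)) has_integral (s * (1 - xi s r))) {0..r}"
  proof -
    have "chi (0 + 1 - s^2/2) = 0" using s2 by (intro chi_zero) simp
    thus ?thesis using has_integral_mult_right[OF chi_integral[OF r, of s], of s] by (simp add: xi_def)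
  qed
  have A1: "integral {0..r} Af \<le> s * (1 - xi s r)"
  proof -
    have "integral {0..r} Af \<le> integral {0..r} (\<lambda>t. s * (rho1 (t + 1 - s^2/2) / rho0))"
    proof (rule integral_le[OF iA])
      show "(\<lambda>t. s * (rho1 (t + 1 - s^2/2) / rho0)) integrable_on {0..r}" using hA by blast
    next
      fix t assume t: "t \<in> {0..r}"
      have le1: "t / sqrt (t^2+s^2) \<le> 1"
      proof -
        have "sqrt (t^2) \<le> sqrt (t^2+s^2)" by simp
        thus ?thesis using t sq[of t] by simp
      qed
      have nn: "0 \<le> s * (rho1 (t + 1 - s^2/2) / rho0)" using s rho0_pos rho1_nonneg by simp
      have "Af t = s * (rho1 (t + 1 - s^2/2) / rho0) * (t / sqrt (t^2+s^2))" by (simp add: Af_def)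
      also have "\<dots> \<le> s * (rho1 (t + 1 - s^2/2) / rho0) * 1" by (rule mult_left_mono[OF le1 nn])
      finally show "Af t \<le> s * (rho1 (t + 1 - s^2/2) / rho0)" by simp
    qed
    thus ?thesis using hA integral_unique by metis
  qed
  have B1: "integral {0..r} Bf \<le> 1 - s / sqrt (r^2+s^2)"
  proof -
    have "integral {0..r} Bf \<le> integral {0..r} p"
    proof (rule integral_le[OF iB ip])
      fix t assume t: "t \<in> {0..r}"
      have "Bf t = xi s t * p t" by (simp add: Bf_def p_def)
      also have "\<dots> \<le> 1 * p t" using xi01[of t] p0[of t] t by (intro mult_right_mono) auto
      finally show "Bf t \<le> p t" by simp
    qed
    thus ?thesis using p_integral[OF s r] integral_unique unfolding p_def by metis
  qed
  have B0: "1 - s / sqrt (m^2+s^2) \<le> integral {0..r} Bf"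
  proof -
    have "integral {0..m} Bf + integral {m..r} Bf = integral {0..r} Bf"
      by (rule Henstock_Kurzweil_Integration.integral_combine[OF m0 iB])
    moreover have "0 \<le> integral {m..r} Bf"
    proof (rule integral_nonneg[OF iB])
      fix t assume "t \<in> {m..r}"
      hence "t \<ge> 0" using m0 by auto
      have "Bf t = xi s t * p t" by (simp add: Bf_def p_def)
      thus "0 \<le> Bf t" using xi01[of t] p0[OF \<open>t \<ge> 0\<close>] by simp
    qed
    moreover have "integral {0..m} Bf = integral {0..m} p"
    proof (rule integral_cong)
      fix t assume "t \<in> {0..m}"
      hence "t \<le> s^2/2 - 1" by (auto simp: m_def)
      thus "Bf t = p t" by (simp add: Bf_def p_def xi_one)
    qed
    moreover have "integral {0..m} p = 1 - s / sqrt (m^2+s^2)"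
      using p_integral[OF s m0(1)] integral_unique unfolding p_def by metis
    ultimately show ?thesis by linarith
  qed
  show "s / sqrt (r^2+s^2) \<le> D" using Deq A0 B1 by linarith
  show "D \<le> s / sqrt (m^2+s^2) + s * (1 - xi s r)" using Deq A1 B0 by linarith
qed

theorem lemma6p1:
  shows "\<exists>C>0. \<forall>s r. s \<ge> 2 \<and> r \<ge> 0 \<longrightarrow>
    (\<exists>D. ((\<lambda>\<sigma>. T \<sigma> r) has_real_derivative D) (at s within {2..}) \<and>
      (r \<le> -1 + s^2/2 \<longrightarrow> \<bar>D\<bar> \<le> C * s / sqrt (s^2 + r^2)) \<and>
      (-1 + s^2/2 \<le> r \<and> r \<le> s^2/2 \<longrightarrow>
         \<bar>D\<bar> \<le> C * (xi s r * s / sqrt (s^2 + r^2) + 2 * (1 - xi s r) * s)) \<and>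
      (r \<ge> s^2/2 \<longrightarrow> \<bar>D\<bar> \<le> 2 * C * s))"
proof (rule exI[of _ 3], rule conjI[rotated], intro allI impI)
  fix s r :: real assume sr: "s \<ge> 2 \<and> r \<ge> 0"
  hence s: "s \<ge> 2" and r: "r \<ge> 0" by auto
  define D where "D = 1 + integral {0..r} (fD s)"
  define m where "m = min r (s^2/2 - 1)"
  have "(4::real) \<le> s * s" using mult_mono[of 2 s 2 s] s by simp
  hence s2: "s^2 \<ge> 4" by (simp add: power2_eq_square)
  have lo: "s / sqrt (r^2+s^2) \<le> D" and hi: "D \<le> s / sqrt (m^2+s^2) + s * (1 - xi s r)"
    using D_bounds[OF s r] unfolding D_def m_def by auto
  have comm: "sqrt (s^2 + r^2) = sqrt (r^2+s^2)" by (simp add: add.commute)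
  define a where "a = s / sqrt (r^2+s^2)"
  have sqr: "sqrt (r^2+s^2) > 0" using s by (simp add: add_nonneg_pos)
  have a0: "a > 0" using sqr s by (simp add: a_def)
  have "s \<le> sqrt (r^2+s^2)" using s by (simp add: real_le_rsqrt)
  hence a1: "a \<le> 1" using sqr by (simp add: a_def)
  have absD: "\<bar>D\<bar> = D" using lo a0 unfolding a_def by simp
  have xi01: "0 \<le> xi s r" "xi s r \<le> 1" using chi_ge chi_le by (auto simp: xi_def)
  have sqm: "sqrt (m^2+s^2) > 0" using s by (simp add: add_nonneg_pos)
  have am1: "s / sqrt (m^2+s^2) \<le> 1"
  proof -
    have "s \<le> sqrt (m^2+s^2)" using s by (simp add: real_le_rsqrt)
    thus ?thesis using sqm by simp
  qed
  have D_ex: "((\<lambda>\<sigma>. T \<sigma> r) has_real_derivative D) (at s within {2..})"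
    unfolding D_def by (rule T_deriv[OF s])
  show "\<exists>D. ((\<lambda>\<sigma>. T \<sigma> r) has_real_derivative D) (at s within {2..}) \<and>
      (r \<le> -1 + s^2/2 \<longrightarrow> \<bar>D\<bar> \<le> 3 * s / sqrt (s^2 + r^2)) \<and>
      (-1 + s^2/2 \<le> r \<and> r \<le> s^2/2 \<longrightarrow>
         \<bar>D\<bar> \<le> 3 * (xi s r * s / sqrt (s^2 + r^2) + 2 * (1 - xi s r) * s)) \<and>
      (r \<ge> s^2/2 \<longrightarrow> \<bar>D\<bar> \<le> 2 * 3 * s)"
  proof (intro exI[of _ D] conjI impI D_ex)
    assume h: "r \<le> -1 + s^2/2"
    hence "m = r" by (simp add: m_def)
    moreover have "xi s r = 1" using h by (intro xi_one) simp
    ultimately have "D \<le> a" using hi by (simp add: a_def)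
    thus "\<bar>D\<bar> \<le> 3 * s / sqrt (s^2 + r^2)" using absD a0 unfolding comm a_def by simp
  next
    assume h: "-1 + s^2/2 \<le> r \<and> r \<le> s^2/2"
    have m2: "s / sqrt (m^2+s^2) \<le> 2 * a"
    proof (cases "r \<le> s^2/2 - 1")
      case True thus ?thesis using a0 by (simp add: m_def a_def)
    next
      case False
      hence mm: "m = s^2/2 - 1" by (simp add: m_def)
      have "r \<le> 2 * m" using h s2 mm by simp
      hence "r^2 \<le> (2*m)^2" using r by (intro power_mono) auto
      hence "r^2 \<le> 4 * m^2" by (simp add: power_mult_distrib)
      moreover have "4 * (m^2+s^2) = 4 * m^2 + 4 * s^2" by simp
      ultimately have "r^2+s^2 \<le> 4 * (m^2+s^2)" using zero_le_power2[of s] by linarith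
      hence "sqrt (r^2+s^2) \<le> sqrt (4 * (m^2+s^2))" by (rule real_sqrt_le_mono)
      moreover have "sqrt (4 * (m^2+s^2)) = 2 * sqrt (m^2+s^2)"
        using real_sqrt_mult[of 4 "m^2+s^2"] real_sqrt_four by simp
      ultimately have le: "sqrt (r^2+s^2) \<le> 2 * sqrt (m^2+s^2)" by linarith
      have "s / sqrt (m^2+s^2) = 2 * s / (2 * sqrt (m^2+s^2))" by simp
      also have "\<dots> \<le> 2 * s / sqrt (r^2+s^2)" using le sqr sqm s by (intro divide_left_mono) auto
      finally show ?thesis by (simp add: a_def)
    qed
    have "(1 - xi s r) * a \<le> (1 - xi s r) * s" using xi01 a1 s by (intro mult_left_mono) auto
    moreover have "s * xi s r \<le> s" using xi01 s by (simp add: mult_left_le)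
    moreover have "0 \<le> a * xi s r" using xi01 a0 by simp
    ultimately have "D \<le> 3 * (xi s r * a + 2 * (1 - xi s r) * s)" using hi m2 xi01 a0
      by (simp add: algebra_simps)
    thus "\<bar>D\<bar> \<le> 3 * (xi s r * s / sqrt (s^2 + r^2) + 2 * (1 - xi s r) * s)"
      using absD unfolding comm a_def by simp
  next
    assume "r \<ge> s^2/2"
    have "s * (1 - xi s r) \<le> s" using xi01 s by simp
    thus "\<bar>D\<bar> \<le> 2 * 3 * s" using absD hi am1 s by linarith
  qed
next
  show "(3::real) > 0" by simp
qed

end
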